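(* Let $n\ge2$, let $A$ be a random variable with values in $\{1,\dots,n\}$, $\mathbb{P}(A=i)=p_i$, $\sum_i p_i=1$, and let $(X_1,\dots,X_n)$ be independent of $A$ and multivariate normal with all means equal to $\mu<0$, all variances equal to $\sigma^2>0$, and all pairwise correlations equal to $\rho$. For $z\in\mathbb{R}$ let $h(z)=\mathbb{E}\left[\mathbb{I}(X_A>z)\sum_{i=1}^n X_i\right]$. Then $h(0)<0$ if \[-\frac{1}{n-1}\le\rho<\left(\frac{n}{n-1}\right)\left(\frac{-\mu}{\sigma}\right)M\left(\frac{-\mu}{\sigma}\right)-\frac{1}{n-1}.\]
   Context: $\phi,\Phi$ are the standard normal density and CDF, and $M(\alpha)=(1-\Phi(\alpha))/\phi(\alpha)$ is the Mills ratio. $h(z)$ is the long-run average overall performance of a firm that, in each period, picks a primary dimension $A$ and adopts the innovation iff its effect $X_A$ on that dimension exceeds the hurdle $z$. *)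

theory Defs
  imports "HOL-Probability.Probability"
begin

definition std_phi :: "real \<Rightarrow> real" where
  "std_phi x = std_normal_density x"

definition std_Phi :: "real \<Rightarrow> real" where
  "std_Phi x = (LINT t:{..x}|lborel. std_normal_density t)"

definition mills :: "real \<Rightarrow> real" where
  "mills \<alpha> = (1 - std_Phi \<alpha>) / std_phi \<alpha>"

definition normal_law :: "real \<Rightarrow> real \<Rightarrow> real measure" where
  "normal_law m v = (if v = 0 then return borel m
                     else density lborel (normal_density m (sqrt v)))"

text \<open>(X_1,...,X_n) on M is multivariate normal with mean vector mu and
  covariance matrix C: every linear combination is normal with the
  corresponding mean and variance (Cramer--Wold definition; allows singular C).\<close>
definition multivariate_normal ::
  "'a measure \<Rightarrow> nat \<Rightarrow> (nat \<Rightarrow> 'a \<Rightarrow> real) \<Rightarrow> (nat \<Rightarrow> real) \<Rightarrow> (nat \<Rightarrow> nat \<Rightarrow> real) \<Rightarrow> bool"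
where
  "multivariate_normal M n X mu C \<longleftrightarrow>
     (\<forall>i\<in>{1..n}. X i \<in> borel_measurable M) \<and>
     (\<forall>c :: nat \<Rightarrow> real.
        distr M borel (\<lambda>\<omega>. \<Sum>i=1..n. c i * X i \<omega>)
          = normal_law (\<Sum>i=1..n. c i * mu i) (\<Sum>i=1..n. \<Sum>j=1..n. c i * c j * C i j))"

definition h :: "'a measure \<Rightarrow> nat \<Rightarrow> ('a \<Rightarrow> nat) \<Rightarrow> (nat \<Rightarrow> 'a \<Rightarrow> real) \<Rightarrow> real \<Rightarrow> real" where
  "h M n A X z = (\<integral>\<omega>. (if X (A \<omega>) \<omega> > z then 1 else 0) * (\<Sum>i=1..n. X i \<omega>) \<partial>M)"

end

theory Submission
  imports Defs "HOL-Real_Asymp.Real_Asymp"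
begin

lemma normal_law_integral:
  fixes g :: "real \<Rightarrow> real"
  assumes s: "s > 0" and g[measurable]: "g \<in> borel_measurable borel"
  shows "integral\<^sup>L (normal_law m (s^2)) g = (\<integral>w. std_normal_density w * g (m + s*w) \<partial>lborel)"
proof -
  have "normal_law m (s^2) = density lborel (\<lambda>x. ennreal (normal_density m s x))"
    using s by (simp add: normal_law_def)
  then have "integral\<^sup>L (normal_law m (s^2)) g = (\<integral>x. normal_density m s x * g x \<partial>lborel)"
    by (simp add: integral_density)
  also have "\<dots> = \<bar>s\<bar> *\<^sub>R (\<integral>w. normal_density m s (m + s*w) * g (m + s*w) \<partial>lborel)"
    using s by (intro lborel_integral_real_affine) simp
  also have "\<dots> = (\<integral>w. std_normal_density w * g (m + s*w) \<partial>lborel)"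
  proof -
    have "\<And>w. s * normal_density m s (m + s*w) = std_normal_density w"
      using s by (simp add: normal_density_def real_sqrt_mult power_mult_distrib field_simps)
    then show ?thesis using s
      by (simp add: integral_mult_right_zero[symmetric] mult.assoc[symmetric])
  qed
  finally show ?thesis .
qed
lemma integrable_phi_abs: "integrable lborel (\<lambda>x. std_normal_density x * \<bar>x\<bar>)"
  using integrable_std_normal_moment_abs[of 1] by simp

lemma integrable_phi_x: "integrable lborel (\<lambda>x. std_normal_density x * x)"
  using integrable_std_normal_moment[of 1] by simp

lemma deriv_phi: "(std_normal_density has_real_derivative (- x * std_normal_density x)) (at x)"
  unfolding std_normal_density_def
  by (auto intro!: derivative_eq_intros simp: field_simps power2_eq_square)

lemma Tt_eq: "(\<integral>w. std_normal_density w * (indicator {b<..} w * w) \<partial>lborel) = std_normal_density b"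
proof -
  have xphi: "integrable lborel (\<lambda>x. x * std_normal_density x)"
    using integrable_phi_x by (simp add: mult.commute)
  have "(LBINT x=ereal b..\<infinity>. x * std_normal_density x) = 0 - (- std_normal_density b)"
  proof (rule interval_integral_FTC_integrable)
    show "ereal b < \<infinity>" by simp
    fix x assume "ereal b < ereal x" "ereal x < \<infinity>"
    show "((\<lambda>x. - std_normal_density x) has_vector_derivative x * std_normal_density x) (at x)"
      using deriv_phi[of x] unfolding has_real_derivative_iff_has_vector_derivative[symmetric]
      by (auto intro!: derivative_eq_intros)
    show "isCont (\<lambda>x. x * std_normal_density x) x"
      unfolding std_normal_density_def by (intro continuous_intros) auto
  next
    show "set_integrable lborel (einterval (ereal b) \<infinity>) (\<lambda>x. x * std_normal_density x)"
      unfolding set_integrable_def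
      by (rule integrable_mult_indicator) (simp_all add: xphi)
    show "(((\<lambda>x. - std_normal_density x) \<circ> real_of_ereal) \<longlongrightarrow> - std_normal_density b) (at_right (ereal b))"
      unfolding ereal_tendsto_simps std_normal_density_def
      by (intro tendsto_intros) auto
    have "((\<lambda>x. - (1 / sqrt (2 * pi) * exp (- x\<^sup>2 / 2))) \<longlongrightarrow> - (1 / sqrt (2 * pi) * 0)) at_top"
      by real_asymp
    then show "(((\<lambda>x. - std_normal_density x) \<circ> real_of_ereal) \<longlongrightarrow> 0) (at_left \<infinity>)"
      unfolding ereal_tendsto_simps std_normal_density_def by simp
  qed
  then show ?thesis
    by (simp add: interval_lebesgue_integral_def set_lebesgue_integral_def ac_simps)
qed

definition Qt :: "real \<Rightarrow> real" where
  "Qt b = (\<integral>w. std_normal_density w * indicator {b<..} w \<partial>lborel)"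

lemma integrable_phi_ind: "integrable lborel (\<lambda>w. std_normal_density w * indicator S w)"
  if "S \<in> sets borel" for S :: "real set"
proof -
  have "integrable lborel (\<lambda>x. indicator S x *\<^sub>R std_normal_density x)"
    by (rule integrable_mult_indicator) (use that in auto)
  then show ?thesis by (simp add: mult.commute)
qed

lemma Phi_alt: "std_Phi b = (\<integral>w. std_normal_density w * indicator {..b} w \<partial>lborel)"
  unfolding std_Phi_def set_lebesgue_integral_def by (simp add: mult.commute)

lemma Qt_Phi: "Qt b = 1 - std_Phi b"
proof -
  have "(\<integral>w. std_normal_density w * indicator {..b} w + std_normal_density w * indicator {b<..} w \<partial>lborel)
     = std_Phi b + Qt b"
    unfolding Phi_alt Qt_def
    by (rule Bochner_Integration.integral_add) (auto intro!: integrable_phi_ind)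
  moreover have "(\<integral>w. std_normal_density w * indicator {..b} w + std_normal_density w * indicator {b<..} w \<partial>lborel) = (\<integral>w. std_normal_density w \<partial>lborel)"
    by (intro Bochner_Integration.integral_cong) (auto split: split_indicator)
  ultimately show ?thesis by simp
qed

lemma phi_le1: "std_normal_density w \<le> 1"
proof -
  have "exp (- w\<^sup>2 / 2) \<le> 1" by simp
  moreover have "1 / sqrt (2 * pi) \<le> 1" using pi_gt3 by (simp add: field_simps)
  ultimately show ?thesis unfolding std_normal_density_def
    by (metis exp_ge_zero mult_le_one)
qed

lemma Qt_lip: assumes "b \<le> b'" shows "0 \<le> Qt b - Qt b'" "Qt b - Qt b' \<le> b' - b"
proof -
  have "(\<integral>w. std_normal_density w * indicator {b<..} w - std_normal_density w * indicator {b'<..} w \<partial>lborel) = Qt b - Qt b'"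
    unfolding Qt_def by (rule Bochner_Integration.integral_diff) (auto intro!: integrable_phi_ind)
  moreover have "(\<integral>w. std_normal_density w * indicator {b<..} w - std_normal_density w * indicator {b'<..} w \<partial>lborel)
     = (\<integral>w. std_normal_density w * indicator {b<..b'} w \<partial>lborel)"
    by (intro Bochner_Integration.integral_cong) (use assms in \<open>auto split: split_indicator\<close>)
  ultimately have eq: "Qt b - Qt b' = (\<integral>w. std_normal_density w * indicator {b<..b'} w \<partial>lborel)" by simp
  show "0 \<le> Qt b - Qt b'" unfolding eq by (intro Bochner_Integration.integral_nonneg) auto
  have "(\<integral>w. std_normal_density w * indicator {b<..b'} w \<partial>lborel) \<le> (\<integral>w. indicator {b<..b'} w \<partial>lborel)"
    by (intro Bochner_Integration.integral_mono integrable_phi_ind) (use assms in \<open>auto simp: phi_le1 integrable_indicator_iff emeasure_lborel_Ioc split: split_indicator\<close>)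
  also have "\<dots> = b' - b" using assms by simp
  finally show "Qt b - Qt b' \<le> b' - b" unfolding eq .
qed

lemma isCont_Qt: "isCont Qt x"
  unfolding isCont_def LIM_eq
proof (intro allI impI)
  fix r :: real assume "0 < r"
  show "\<exists>s>0. \<forall>y. y \<noteq> x \<and> norm (y - x) < s \<longrightarrow> norm (Qt y - Qt x) < r"
  proof (intro exI[of _ r] conjI allI impI)
    fix y assume y: "y \<noteq> x \<and> norm (y - x) < r"
    have "\<bar>Qt y - Qt x\<bar> \<le> \<bar>y - x\<bar>"
    proof (cases "y \<le> x")
      case True then show ?thesis using Qt_lip[OF True] by simp
    next
      case False then show ?thesis using Qt_lip[of x y] by simp
    qed
    then show "norm (Qt y - Qt x) < r" using y by simp
  qed (rule \<open>0 < r\<close>)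
qed

definition Fp :: "real \<Rightarrow> real \<Rightarrow> real" where
  "Fp m s = (\<integral>w. std_normal_density w * max (m + s*w) 0 \<partial>lborel)"

lemma integrable_phi_lin: "integrable lborel (\<lambda>w. std_normal_density w * \<bar>m\<bar> + \<bar>s\<bar> * (std_normal_density w * \<bar>w\<bar>))"
  using integrable_phi_abs by auto

lemma integrable_F: "integrable lborel (\<lambda>w. std_normal_density w * max (m + s*w) 0)"
proof (rule Bochner_Integration.integrable_bound[OF integrable_phi_lin[of m s]])
  show "AE x in lborel. norm (std_normal_density x * max (m + s * x) 0)
        \<le> norm (std_normal_density x * \<bar>m\<bar> + \<bar>s\<bar> * (std_normal_density x * \<bar>x\<bar>))"
  proof (intro AE_I2)
    fix x
    have "max (m + s * x) 0 \<le> \<bar>m\<bar> + \<bar>s\<bar> * \<bar>x\<bar>"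
      using abs_ge_self[of m] abs_ge_self[of "s*x"] abs_mult[of s x] by (simp add: max_def)
    then have "std_normal_density x * max (m + s * x) 0 \<le> std_normal_density x * (\<bar>m\<bar> + \<bar>s\<bar> * \<bar>x\<bar>)"
      by (intro mult_left_mono) auto
    then show "norm (std_normal_density x * max (m + s * x) 0)
        \<le> norm (std_normal_density x * \<bar>m\<bar> + \<bar>s\<bar> * (std_normal_density x * \<bar>x\<bar>))"
      by (simp add: algebra_simps abs_mult)
  qed
qed simp

lemma integrable_phi_indx: "integrable lborel (\<lambda>w. std_normal_density w * (indicator {b<..} w * w))"
proof (rule Bochner_Integration.integrable_bound[OF integrable_phi_abs])
  show "AE x in lborel. norm (std_normal_density x * (indicator {b<..} x * x)) \<le> norm (std_normal_density x * \<bar>x\<bar>)"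
    by (intro AE_I2) (auto simp: abs_mult split: split_indicator)
qed simp

lemma F_diff:
  assumes "s' > 0"
  shows "Fp m' s' - Fp m s \<le> (m' - m) * Qt (- m'/s') + (s' - s) * std_normal_density (- m'/s')"
proof -
  let ?b = "- m'/s'"
  have "Fp m' s' - Fp m s = (\<integral>w. std_normal_density w * max (m' + s'*w) 0 - std_normal_density w * max (m + s*w) 0 \<partial>lborel)"
    unfolding Fp_def by (rule Bochner_Integration.integral_diff[symmetric]) (auto intro: integrable_F)
  also have "\<dots> \<le> (\<integral>w. (m' - m) * (std_normal_density w * indicator {?b<..} w) + (s' - s) * (std_normal_density w * (indicator {?b<..} w * w)) \<partial>lborel)"
  proof (intro Bochner_Integration.integral_mono)
    fix w :: real
    have ind: "indicator {?b<..} w = (if m' + s'*w > 0 then 1 else (0::real))"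
      using assms by (auto simp: field_simps split: split_indicator)
    have "max (m' + s'*w) 0 - max (m + s*w) 0 \<le> (if m' + s'*w > 0 then (m' + s'*w) - (m + s*w) else 0)"
      by (simp add: max_def)
    also have "\<dots> = (if m' + s'*w > 0 then (m' - m) + (s' - s) * w else 0)"
      by (simp add: algebra_simps)
    finally have "max (m' + s'*w) 0 - max (m + s*w) 0 \<le> (if m' + s'*w > 0 then (m' - m) + (s' - s) * w else 0)" .
    then have "std_normal_density w * (max (m' + s'*w) 0 - max (m + s*w) 0)
       \<le> std_normal_density w * (if m' + s'*w > 0 then (m' - m) + (s' - s) * w else 0)"
      by (intro mult_left_mono) auto
    then show "std_normal_density w * max (m' + s'*w) 0 - std_normal_density w * max (m + s*w) 0
      \<le> (m' - m) * (std_normal_density w * indicator {?b<..} w) + (s' - s) * (std_normal_density w * (indicator {?b<..} w * w))"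
    proof -
      have eqR: "(m' - m) * (std_normal_density w * indicator {?b<..} w) + (s' - s) * (std_normal_density w * (indicator {?b<..} w * w))
         = std_normal_density w * (if m' + s'*w > 0 then (m' - m) + (s' - s) * w else 0)"
        unfolding ind by (cases "0 < m' + s'*w") (simp_all add: algebra_simps)
      show ?thesis unfolding eqR right_diff_distrib[symmetric] by fact
    qed
  qed (auto intro!: integrable_F integrable_phi_ind integrable_phi_indx Bochner_Integration.integrable_add integrable_mult_right Bochner_Integration.integrable_diff)
  also have "\<dots> = (m' - m) * Qt ?b + (s' - s) * (\<integral>w. std_normal_density w * (indicator {?b<..} w * w) \<partial>lborel)"
    unfolding Qt_def
    by (subst Bochner_Integration.integral_add) (auto intro!: integrable_phi_ind integrable_phi_indx)
  also have "\<dots> = (m' - m) * Qt ?b + (s' - s) * std_normal_density ?b"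
    by (simp only: Tt_eq)
  finally show ?thesis .
qed

lemma sqrt_bound: assumes "x \<ge> -1" shows "sqrt (1 + x) \<le> 1 + x/2"
proof -
  have "sqrt (1 + x) \<le> sqrt ((1 + x/2)^2)"
    by (subst real_sqrt_le_iff) (simp add: power2_eq_square algebra_simps)
  also have "\<dots> = 1 + x/2" using assms by simp
  finally show ?thesis .
qed

lemma isCont_Qt': "isCont f x \<Longrightarrow> isCont (\<lambda>t. Qt (f t)) x"
  by (rule isCont_o2[OF _ isCont_Qt])

lemma exists_t:
  fixes \<mu> \<sigma> c N :: real
  assumes "\<sigma> > 0" "c \<ge> 0" "N > 0"
    and neg: "N*\<mu>*Qt(-\<mu>/\<sigma>) + \<sigma>*c * std_normal_density(-\<mu>/\<sigma>) < 0"
  shows "\<exists>t>0. N*\<mu>*Qt(- (\<mu>*(1+N*t))/(\<sigma> * sqrt(1+2*t*c+t^2*N*c)))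
     + \<sigma>*(c + t*N*c/2) * std_normal_density(- (\<mu>*(1+N*t))/(\<sigma> * sqrt(1+2*t*c+t^2*N*c))) < 0"
proof -
  define B where "B t = N*\<mu>*Qt(- (\<mu>*(1+N*t))/(\<sigma> * sqrt(1+2*t*c+t^2*N*c)))
     + \<sigma>*(c + t*N*c/2) * std_normal_density(- (\<mu>*(1+N*t))/(\<sigma> * sqrt(1+2*t*c+t^2*N*c)))" for t
  have "isCont B 0"
    unfolding B_def std_normal_density_def
    using assms(1) by (intro continuous_intros isCont_Qt') auto
  moreover have "B 0 < 0" using neg by (simp add: B_def)
  ultimately have "eventually (\<lambda>t. B t < 0) (at 0)"
    unfolding isCont_def using order_tendstoD(2) by blast
  then obtain d where d: "d > 0" "\<And>t. t \<noteq> 0 \<Longrightarrow> dist t 0 < d \<Longrightarrow> B t < 0"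
    unfolding eventually_at by blast
  then have "B (d/2) < 0" by auto
  with d show ?thesis unfolding B_def by (intro exI[of _ "d/2"]) auto
qed

lemma (in prob_space) normal_integrable:
  assumes [measurable]: "Y \<in> borel_measurable M" and law: "distr M borel Y = normal_law m (s^2)" and s: "s > 0"
  shows "integrable M Y"
proof -
  have "normal_law m (s^2) = density lborel (\<lambda>x. ennreal (normal_density m s x))"
    using s by (simp add: normal_law_def)
  have "integrable (distr M borel Y) (\<lambda>x. x)"
    unfolding law \<open>normal_law m (s^2) = _\<close>
    by (subst integrable_density) (auto simp: integrable_normal_moment_nz_1[OF s])
  then show ?thesis by (subst (asm) integrable_distr_eq) auto
qed

lemma (in prob_space) normal_expect:
  fixes g :: "real \<Rightarrow> real"
  assumes [measurable]: "Y \<in> borel_measurable M" and law: "distr M borel Y = normal_law m (s^2)" and s: "s > 0"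
    and g[measurable]: "g \<in> borel_measurable borel"
  shows "(\<integral>\<omega>. g (Y \<omega>) \<partial>M) = (\<integral>w. std_normal_density w * g (m + s*w) \<partial>lborel)"
proof -
  have "(\<integral>\<omega>. g (Y \<omega>) \<partial>M) = integral\<^sup>L (distr M borel Y) g"
    by (subst integral_distr) auto
  also have "\<dots> = (\<integral>w. std_normal_density w * g (m + s*w) \<partial>lborel)"
    unfolding law by (rule normal_law_integral[OF s g])
  finally show ?thesis .
qed

lemma var_formula:
  fixes c :: "nat \<Rightarrow> real"
  assumes "finite I"
  shows "(\<Sum>i\<in>I. \<Sum>j\<in>I. c i * c j * (if i = j then v else r * v))
       = v * ((1 - r) * (\<Sum>i\<in>I. (c i)^2) + r * (\<Sum>i\<in>I. c i)^2)"
proof -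
  have inner: "(\<Sum>j\<in>I. c i * c j * (if i = j then v else r * v))
      = c i * (r * v) * (\<Sum>j\<in>I. c j) + c i * c i * ((1 - r) * v)" if "i \<in> I" for i
  proof -
    have "(\<Sum>j\<in>I. c i * c j * (if i = j then v else r * v))
        = (\<Sum>j\<in>I. c i * (r * v) * c j + (if i = j then c i * c i * ((1 - r) * v) else 0))"
      by (intro sum.cong) (auto simp: algebra_simps)
    also have "\<dots> = c i * (r * v) * (\<Sum>j\<in>I. c j) + c i * c i * ((1 - r) * v)"
      using assms that by (simp add: sum.distrib sum_distrib_left)
    finally show ?thesis .
  qed
  have "(\<Sum>i\<in>I. \<Sum>j\<in>I. c i * c j * (if i = j then v else r * v))
     = (\<Sum>i\<in>I. c i * (r * v) * (\<Sum>j\<in>I. c j) + c i * c i * ((1 - r) * v))"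
    by (intro sum.cong) (auto simp: inner)
  also have "\<dots> = (\<Sum>i\<in>I. c i * ((r * v) * (\<Sum>j\<in>I. c j))) + (\<Sum>i\<in>I. (c i)^2 * ((1 - r) * v))"
    by (simp add: sum.distrib power2_eq_square mult.assoc)
  also have "\<dots> = (\<Sum>i\<in>I. c i) * ((r * v) * (\<Sum>j\<in>I. c j)) + (\<Sum>i\<in>I. (c i)^2) * ((1 - r) * v)"
    by (simp only: sum_distrib_right)
  finally show ?thesis by (simp add: power2_eq_square algebra_simps)
qed

theorem proposition5:
  fixes M :: "'a measure" and n :: nat and A :: "'a \<Rightarrow> nat"
    and X :: "nat \<Rightarrow> 'a \<Rightarrow> real" and \<mu> \<sigma> \<rho> :: real
  assumes "prob_space M"
    and "n \<ge> 2"
    and "A \<in> measurable M (count_space UNIV)"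
    and "\<forall>\<omega>\<in>space M. A \<omega> \<in> {1..n}"
    and "multivariate_normal M n X (\<lambda>i. \<mu>)
           (\<lambda>i j. if i = j then \<sigma>\<^sup>2 else \<rho> * \<sigma>\<^sup>2)"
    and "prob_space.indep_set M
           {A -` S \<inter> space M | S. S \<in> sets (count_space UNIV)}
           {(\<lambda>\<omega>. restrict (\<lambda>i. X i \<omega>) {1..n}) -` S \<inter> space M | S.
              S \<in> sets (Pi\<^sub>M {1..n} (\<lambda>_. borel))}"
    and "\<mu> < 0" and "\<sigma> > 0"
    and "- 1 / (real n - 1) \<le> \<rho>"
    and "\<rho> < (real n / (real n - 1)) * (- \<mu> / \<sigma>) * mills (- \<mu> / \<sigma>) - 1 / (real n - 1)"
  shows "h M n A X 0 < 0"
proof -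
  interpret P: prob_space M by fact
  note Am[measurable] = assms(3)
  have Xm[measurable]: "X i \<in> borel_measurable M" if "i \<in> {1..n}" for i
    using assms(5) that unfolding multivariate_normal_def by auto
  have law: "distr M borel (\<lambda>\<omega>. \<Sum>i=1..n. c i * X i \<omega>)
     = normal_law (\<Sum>i=1..n. c i * \<mu>) (\<sigma>\<^sup>2 * ((1 - \<rho>) * (\<Sum>i=1..n. (c i)^2) + \<rho> * (\<Sum>i=1..n. c i)^2))" for c
  proof -
    have "distr M borel (\<lambda>\<omega>. \<Sum>i=1..n. c i * X i \<omega>) = normal_law (\<Sum>i=1..n. c i * \<mu>)
       (\<Sum>i=1..n. \<Sum>j=1..n. c i * c j * (if i = j then \<sigma>\<^sup>2 else \<rho> * \<sigma>\<^sup>2))"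
      using assms(5) unfolding multivariate_normal_def by blast
    then show ?thesis by (simp only: var_formula[OF finite_atLeastAtMost])
  qed
  define S where "S \<omega> = (\<Sum>i=1..n. X i \<omega>)" for \<omega>
  have Sm[measurable]: "S \<in> borel_measurable M" unfolding S_def by measurable
  define cc where "cc = 1 + (real n - 1) * \<rho>"
  have n1: "real n - 1 > 0" using assms(2) by simp
  have cc_nn: "cc \<ge> 0"
  proof -
    have "-1 \<le> \<rho> * (real n - 1)" using assms(9) n1 by (simp add: field_simps)
    then show ?thesis unfolding cc_def by (simp add: algebra_simps)
  qed
  have Xint: "integrable M (X i)" if i: "i \<in> {1..n}" for i
  proof -
    have "distr M borel (\<lambda>\<omega>. \<Sum>j=1..n. (if j = i then 1 else 0) * X j \<omega>) = normal_law \<mu> (\<sigma>^2)"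
      unfolding law using i by (simp add: if_distrib[of "\<lambda>x. x^2"] if_distrib[of "\<lambda>x. x * \<mu>"] cong: if_cong)
    moreover have "(\<lambda>\<omega>. \<Sum>j=1..n. (if j = i then 1 else 0) * X j \<omega>) = X i"
      using i by (auto simp: if_distrib[of "\<lambda>x. x * X _ _"] cong: if_cong)
    ultimately show ?thesis using assms(8) by (intro P.normal_integrable[of _ \<mu> \<sigma>]) (use Xm[OF i] in auto)
  qed
  have Sint: "integrable M S" unfolding S_def using Xint by auto
  define sd where "sd t = \<sigma> * sqrt (1 + 2*t*cc + t^2*real n*cc)" for t
  have sd_pos: "sd t > 0" if "t \<ge> 0" for t
  proof -
    have "1 + 2*t*cc + t^2*real n*cc > 0" using that cc_nn by (simp add: add_pos_nonneg)
    then show ?thesis unfolding sd_def using assms(8) by simp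
  qed
  have Zlaw: "distr M borel (\<lambda>\<omega>. X a \<omega> + t * S \<omega>) = normal_law (\<mu>*(1+real n*t)) ((sd t)^2)"
    if a: "a \<in> {1..n}" and t: "t \<ge> 0" for a t
  proof -
    define c where "c i = t + (if i = a then 1 else 0)" for i :: nat
    have e1: "(\<lambda>\<omega>. \<Sum>i=1..n. c i * X i \<omega>) = (\<lambda>\<omega>. X a \<omega> + t * S \<omega>)"
    proof
      fix \<omega>
      have "(\<Sum>i=1..n. c i * X i \<omega>) = (\<Sum>i=1..n. t * X i \<omega> + (if i = a then X i \<omega> else 0))"
        unfolding c_def by (intro sum.cong) (auto simp: algebra_simps)
      also have "\<dots> = t * S \<omega> + X a \<omega>"
        using a by (simp add: sum.distrib sum_distrib_left S_def)
      finally show "(\<Sum>i=1..n. c i * X i \<omega>) = X a \<omega> + t * S \<omega>" by simp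
    qed
    have e2: "(\<Sum>i=1..n. c i * \<mu>) = \<mu>*(1+real n*t)"
    proof -
      have "(\<Sum>i=1..n. c i * \<mu>) = (\<Sum>i=1..n. t * \<mu> + (if i = a then \<mu> else 0))"
        unfolding c_def by (intro sum.cong) (auto simp: algebra_simps)
      also have "\<dots> = \<mu>*(1+real n*t)" using a by (simp add: sum.distrib algebra_simps)
      finally show ?thesis .
    qed
    have sc: "(\<Sum>i=1..n. c i) = 1 + real n * t"
      using a by (simp add: c_def sum.distrib)
    have sc2: "(\<Sum>i=1..n. (c i)^2) = 1 + 2*t + real n * t^2"
    proof -
      have "(\<Sum>i=1..n. (c i)^2) = (\<Sum>i=1..n. t^2 + (if i = a then 2*t + 1 else 0))"
        unfolding c_def by (intro sum.cong) (auto simp: power2_eq_square algebra_simps)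
      also have "\<dots> = 1 + 2*t + real n * t^2" using a by (simp add: sum.distrib)
      finally show ?thesis .
    qed
    have e3: "\<sigma>\<^sup>2 * ((1 - \<rho>) * (\<Sum>i=1..n. (c i)^2) + \<rho> * (\<Sum>i=1..n. c i)^2) = (sd t)^2"
    proof -
      have "1 + 2*t*cc + t^2*real n*cc \<ge> 0" using t cc_nn by simp
      then have "(sd t)^2 = \<sigma>^2 * (1 + 2*t*cc + t^2*real n*cc)"
        unfolding sd_def by (simp add: power_mult_distrib)
      also have "\<dots> = \<sigma>\<^sup>2 * ((1 - \<rho>) * (1 + 2*t + real n * t^2) + \<rho> * (1 + real n * t)^2)"
        unfolding cc_def by (simp add: power2_eq_square algebra_simps)
      finally show ?thesis unfolding sc sc2 by simp
    qed
    show ?thesis using law[of c] unfolding e1 e2 e3 .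
  qed
  have EZ: "(\<integral>\<omega>. max (X a \<omega> + t * S \<omega>) 0 \<partial>M) = Fp (\<mu>*(1+real n*t)) (sd t)"
    if a: "a \<in> {1..n}" and t: "t \<ge> 0" for a t
    unfolding Fp_def
    by (rule P.normal_expect[OF _ Zlaw[OF a t] sd_pos[OF t]]) (use Xm[OF a] in auto)
  define \<alpha> where "\<alpha> = - \<mu> / \<sigma>"
  have phia: "std_normal_density \<alpha> > 0" by (simp add: normal_density_pos)
  have B0: "real n * \<mu> * Qt \<alpha> + \<sigma> * cc * std_normal_density \<alpha> < 0"
  proof -
    have "\<rho> * (real n - 1) < ((real n / (real n - 1)) * \<alpha> * mills \<alpha> - 1 / (real n - 1)) * (real n - 1)"
      by (rule mult_strict_right_mono[OF assms(10)[folded \<alpha>_def] n1])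
    also have "\<dots> = real n * \<alpha> * mills \<alpha> - 1"
    proof -
      have "\<And>k::real. k \<noteq> 0 \<Longrightarrow> ((real n / k) * \<alpha> * mills \<alpha> - 1 / k) * k = real n * \<alpha> * mills \<alpha> - 1"
        by (simp add: field_simps)
      then show ?thesis using n1 by simp
    qed
    finally have "cc < real n * \<alpha> * mills \<alpha>" unfolding cc_def by (simp add: algebra_simps)
    then have "cc * std_normal_density \<alpha> < real n * \<alpha> * mills \<alpha> * std_normal_density \<alpha>"
      using phia by (rule mult_strict_right_mono)
    also have "real n * \<alpha> * mills \<alpha> * std_normal_density \<alpha> = real n * \<alpha> * Qt \<alpha>"
      using phia by (simp add: mills_def std_phi_def Qt_Phi)
    finally have "\<sigma> * (cc * std_normal_density \<alpha>) < \<sigma> * (real n * \<alpha> * Qt \<alpha>)"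
      using assms(8) by simp
    also have "\<sigma> * (real n * \<alpha> * Qt \<alpha>) = - (real n * \<mu> * Qt \<alpha>)"
      unfolding \<alpha>_def using assms(8) by (simp add: field_simps)
    finally show ?thesis by (simp add: algebra_simps)
  qed
  obtain t where t: "t > 0" and Bt: "real n*\<mu>*Qt(- (\<mu>*(1+real n*t))/(\<sigma> * sqrt(1+2*t*cc+t^2*real n*cc)))
     + \<sigma>*(cc + t*real n*cc/2) * std_normal_density(- (\<mu>*(1+real n*t))/(\<sigma> * sqrt(1+2*t*cc+t^2*real n*cc))) < 0"
    using exists_t[OF assms(8) cc_nn, of "real n" \<mu>] B0 assms(2) unfolding \<alpha>_def by auto
  define \<beta> where "\<beta> = - (\<mu>*(1+real n*t))/(sd t)"
  define Bt where "Bt = real n*\<mu>*Qt \<beta> + \<sigma>*(cc + t*real n*cc/2) * std_normal_density \<beta>"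
  have Bneg: "Bt < 0" using Bt unfolding Bt_def \<beta>_def sd_def .
  have Ea: "(\<integral>\<omega>. (if X a \<omega> > 0 then 1 else 0) * S \<omega> \<partial>M) \<le> Bt" if a: "a \<in> {1..n}" for a
  proof -
    note [measurable] = Xm[OF a]
    have indm: "(\<lambda>\<omega>. indicator {a} (A \<omega>) :: real) \<in> borel_measurable M" for a
    by (rule measurable_compose[OF Am]) simp
  have gint: "integrable M (\<lambda>\<omega>. (if X a \<omega> > 0 then 1 else 0) * S \<omega>)"
      by (rule Bochner_Integration.integrable_bound[OF Sint]) (auto intro!: AE_I2)
    have Zint: "integrable M (\<lambda>\<omega>. X a \<omega> + t * S \<omega>)" using Xint[OF a] Sint by auto
    have EZ0: "(\<integral>\<omega>. max (X a \<omega>) 0 \<partial>M) = Fp \<mu> \<sigma>"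
      using EZ[OF a, of 0] by (simp add: sd_def)
    have "t * (\<integral>\<omega>. (if X a \<omega> > 0 then 1 else 0) * S \<omega> \<partial>M)
        = (\<integral>\<omega>. t * ((if X a \<omega> > 0 then 1 else 0) * S \<omega>) \<partial>M)" by simp
    also have "\<dots> \<le> (\<integral>\<omega>. max (X a \<omega> + t * S \<omega>) 0 - max (X a \<omega>) 0 \<partial>M)"
    proof (rule Bochner_Integration.integral_mono)
      show "integrable M (\<lambda>\<omega>. t * ((if X a \<omega> > 0 then 1 else 0) * S \<omega>))" using gint by auto
      show "integrable M (\<lambda>\<omega>. max (X a \<omega> + t * S \<omega>) 0 - max (X a \<omega>) 0)"
        using Zint Xint[OF a] by auto
      fix \<omega> show "t * ((if X a \<omega> > 0 then 1 else 0) * S \<omega>) \<le> max (X a \<omega> + t * S \<omega>) 0 - max (X a \<omega>) 0"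
        by (cases "X a \<omega> > 0") auto
    qed
    also have "\<dots> = Fp (\<mu>*(1+real n*t)) (sd t) - Fp \<mu> \<sigma>"
      using Zint Xint[OF a] by (simp add: EZ[OF a] EZ0 less_imp_le[OF t] flip: EZ0)
    also have "\<dots> \<le> (\<mu>*(1+real n*t) - \<mu>) * Qt \<beta> + (sd t - \<sigma>) * std_normal_density \<beta>"
      unfolding \<beta>_def using F_diff[OF sd_pos[OF less_imp_le[OF t]]] by simp
    also have "\<dots> \<le> t * Bt"
    proof -
      have x: "2*t*cc + t^2*real n*cc \<ge> 0" using t cc_nn by simp
      have "sqrt (1 + 2*t*cc + t^2*real n*cc) \<le> 1 + (2*t*cc + t^2*real n*cc)/2"
        using sqrt_bound[of "2*t*cc + t^2*real n*cc"] x by (simp add: add.assoc)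
      then have "\<sigma> * sqrt (1 + 2*t*cc + t^2*real n*cc) \<le> \<sigma> * (1 + (2*t*cc + t^2*real n*cc)/2)"
        using assms(8) by (intro mult_left_mono) auto
      also have "\<sigma> * (1 + (2*t*cc + t^2*real n*cc)/2) = \<sigma> + \<sigma> * (t*cc + t^2*real n*cc/2)"
        by (simp add: field_simps)
      finally have "sd t - \<sigma> \<le> \<sigma> * (t*cc + t^2*real n*cc/2)"
        unfolding sd_def by simp
      then have "(sd t - \<sigma>) * std_normal_density \<beta> \<le> \<sigma> * (t*cc + t^2*real n*cc/2) * std_normal_density \<beta>"
        by (rule mult_right_mono) simp
      then show ?thesis unfolding Bt_def by (simp add: algebra_simps power2_eq_square)
    qed
    finally show ?thesis using t by simp
  qed
  define V where "V \<omega> = restrict (\<lambda>i. X i \<omega>) {1..n}" for \<omega>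
  have Vm[measurable]: "V \<in> measurable M (Pi\<^sub>M {1..n} (\<lambda>_. borel))"
    unfolding V_def by (rule measurable_restrict) (rule Xm)
  define g where "g a \<omega> = (if X a \<omega> > 0 then 1 else 0) * S \<omega>" for a \<omega>
  have gm[measurable]: "g a \<in> borel_measurable M" if "a \<in> {1..n}" for a
    using Xm[OF that] unfolding g_def by measurable
  have indm: "(\<lambda>\<omega>. indicator {a} (A \<omega>) :: real) \<in> borel_measurable M" for a
    by (rule measurable_compose[OF Am]) simp
  have gint: "integrable M (\<lambda>\<omega>. indicator {a} (A \<omega>) * g a \<omega>)" if a: "a \<in> {1..n}" for a
  proof (rule Bochner_Integration.integrable_bound[OF Sint])
    show "(\<lambda>\<omega>. indicator {a} (A \<omega>) * g a \<omega>) \<in> borel_measurable M"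
      by (intro borel_measurable_times indm gm a)
  qed (use a in \<open>auto intro!: AE_I2 simp: g_def split: split_indicator\<close>)
  have fact_a: "(\<integral>\<omega>. indicator {a} (A \<omega>) * g a \<omega> \<partial>M) = (\<integral>\<omega>. indicator {a} (A \<omega>) \<partial>M) * (\<integral>\<omega>. g a \<omega> \<partial>M)"
    if a: "a \<in> {1..n}" for a
  proof -
    define ga where "ga v = (if v a > 0 then 1 else 0) * (\<Sum>i\<in>{1..n}. v i)" for v :: "nat \<Rightarrow> real"
    have gam: "ga \<in> borel_measurable (Pi\<^sub>M {1..n} (\<lambda>_. borel))"
      unfolding ga_def using a by measurable
    have gaV: "(ga \<circ> V) = g a"
      by (rule ext) (use a in \<open>simp add: ga_def V_def g_def S_def\<close>)
    have "P.indep_var borel (\<lambda>\<omega>. indicator {a} (A \<omega>) :: real) borel (g a)"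
      unfolding P.indep_var_def P.indep_vars_def2
    proof
      show "\<forall>i\<in>UNIV. P.random_variable (case_bool borel borel i) (case_bool (\<lambda>\<omega>. indicator {a} (A \<omega>) :: real) (g a) i)"
        using gm[OF a] indm[of a] by (auto split: bool.split)
      show "P.indep_sets (\<lambda>i. {case_bool (\<lambda>\<omega>. indicator {a} (A \<omega>) :: real) (g a) i -` B \<inter> space M | B. B \<in> sets (case_bool borel borel i)}) UNIV"
      proof (rule P.indep_sets_mono_sets[OF assms(6)[unfolded P.indep_set_def]])
        fix i :: bool
        show "{case_bool (\<lambda>\<omega>. indicator {a} (A \<omega>) :: real) (g a) i -` B \<inter> space M | B. B \<in> sets (case_bool borel borel i)}
          \<subseteq> case_bool {A -` S \<inter> space M | S. S \<in> sets (count_space UNIV)}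
              {(\<lambda>\<omega>. restrict (\<lambda>i. X i \<omega>) {1..n}) -` S \<inter> space M | S. S \<in> sets (Pi\<^sub>M {1..n} (\<lambda>_. borel))} i"
        proof (cases i)
          case True
          show ?thesis
          proof
            fix E assume "E \<in> {case_bool (\<lambda>\<omega>. indicator {a} (A \<omega>) :: real) (g a) i -` B \<inter> space M | B. B \<in> sets (case_bool borel borel i)}"
            then obtain B where E: "E = (\<lambda>\<omega>. indicator {a} (A \<omega>) :: real) -` B \<inter> space M" using True by auto
            have "E = A -` {x. (indicator {a} x :: real) \<in> B} \<inter> space M" unfolding E by auto
            then have "E \<in> {A -` S \<inter> space M | S. S \<in> sets (count_space UNIV)}"
              by (simp only: mem_Collect_eq) (rule exI[of _ "{x. (indicator {a} x :: real) \<in> B}"], simp)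
            then show "E \<in> case_bool {A -` S \<inter> space M | S. S \<in> sets (count_space UNIV)}
              {(\<lambda>\<omega>. restrict (\<lambda>i. X i \<omega>) {1..n}) -` S \<inter> space M | S. S \<in> sets (Pi\<^sub>M {1..n} (\<lambda>_. borel))} i"
              using True by auto
          qed
        next
          case False
          have pre1: "g a -` B \<inter> space M = V -` (ga -` B \<inter> space (Pi\<^sub>M {1..n} (\<lambda>_. borel))) \<inter> space M" for B
          proof -
            have "\<And>\<omega>. ga (V \<omega>) = g a \<omega>" using gaV by (metis comp_apply)
            then show ?thesis using measurable_space[OF Vm] by auto
          qed
          have pre2: "ga -` B \<inter> space (Pi\<^sub>M {1..n} (\<lambda>_. borel)) \<in> sets (Pi\<^sub>M {1..n} (\<lambda>_. borel))"
            if "B \<in> sets borel" for B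
            using measurable_sets[OF gam that] .
          show ?thesis
          proof
            fix E assume "E \<in> {case_bool (\<lambda>\<omega>. indicator {a} (A \<omega>) :: real) (g a) i -` B \<inter> space M | B. B \<in> sets (case_bool borel borel i)}"
            then obtain B where E: "E = g a -` B \<inter> space M" and B: "B \<in> sets borel" using False by auto
            let ?S = "ga -` B \<inter> space (Pi\<^sub>M {1..n} (\<lambda>_. borel))"
            have "E = (\<lambda>\<omega>. restrict (\<lambda>i. X i \<omega>) {1..n}) -` ?S \<inter> space M" "?S \<in> sets (Pi\<^sub>M {1..n} (\<lambda>_. borel))"
              using pre1[of B] pre2[OF B] unfolding E V_def by auto
            then have "E \<in> {(\<lambda>\<omega>. restrict (\<lambda>i. X i \<omega>) {1..n}) -` S \<inter> space M | S. S \<in> sets (Pi\<^sub>M {1..n} (\<lambda>_. borel))}"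
              by (simp only: mem_Collect_eq) (rule exI[of _ ?S], simp)
            then show "E \<in> case_bool {A -` S \<inter> space M | S. S \<in> sets (count_space UNIV)}
              {(\<lambda>\<omega>. restrict (\<lambda>i. X i \<omega>) {1..n}) -` S \<inter> space M | S. S \<in> sets (Pi\<^sub>M {1..n} (\<lambda>_. borel))} i"
              using False by simp
          qed
        qed
      qed
    qed
    moreover have "integrable M (\<lambda>\<omega>. indicator {a} (A \<omega>) :: real)"
      by (rule P.integrable_const_bound[where B=1]) (auto simp: indm split: split_indicator)
    moreover have "integrable M (g a)"
      by (rule Bochner_Integration.integrable_bound[OF Sint]) (use a in \<open>auto intro!: AE_I2 simp: g_def\<close>)
    ultimately show ?thesis by (rule P.indep_var_lebesgue_integral)
  qed
  have sum_ind: "(\<Sum>a\<in>{1..n}. (indicator {a} x :: real) * f a) = f x" if "x \<in> {1..n}" for x and f :: "nat \<Rightarrow> real"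
  proof -
    have "(\<Sum>a\<in>{1..n}. (indicator {a} x :: real) * f a) = (\<Sum>a\<in>{1..n}. if x = a then f a else 0)"
      by (intro sum.cong) (auto split: split_indicator)
    also have "\<dots> = f x" using that by simp
    finally show ?thesis .
  qed
  have "h M n A X 0 = (\<integral>\<omega>. (\<Sum>a\<in>{1..n}. indicator {a} (A \<omega>) * g a \<omega>) \<partial>M)"
    unfolding h_def
  proof (rule Bochner_Integration.integral_cong[OF refl])
    fix \<omega> assume "\<omega> \<in> space M"
    then have "A \<omega> \<in> {1..n}" using assms(4) by auto
    then show "(if X (A \<omega>) \<omega> > 0 then 1 else 0) * (\<Sum>i=1..n. X i \<omega>) = (\<Sum>a\<in>{1..n}. indicator {a} (A \<omega>) * g a \<omega>)"
      using sum_ind[of "A \<omega>" "\<lambda>a. g a \<omega>"] by (simp add: g_def S_def)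
  qed
  also have "\<dots> = (\<Sum>a\<in>{1..n}. (\<integral>\<omega>. indicator {a} (A \<omega>) * g a \<omega> \<partial>M))"
    by (rule Bochner_Integration.integral_sum) (rule gint)
  also have "\<dots> = (\<Sum>a\<in>{1..n}. (\<integral>\<omega>. indicator {a} (A \<omega>) \<partial>M) * (\<integral>\<omega>. g a \<omega> \<partial>M))"
    by (intro sum.cong refl fact_a)
  also have "\<dots> \<le> (\<Sum>a\<in>{1..n}. (\<integral>\<omega>. indicator {a} (A \<omega>) \<partial>M) * Bt)"
  proof (intro sum_mono mult_left_mono)
    fix a assume "a \<in> {1..n}"
    then show "(\<integral>\<omega>. g a \<omega> \<partial>M) \<le> Bt" using Ea unfolding g_def by blast
    show "0 \<le> (\<integral>\<omega>. (indicator {a} (A \<omega>) :: real) \<partial>M)" by (rule Bochner_Integration.integral_nonneg) simp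
  qed
  also have "\<dots> = (\<Sum>a\<in>{1..n}. (\<integral>\<omega>. indicator {a} (A \<omega>) \<partial>M)) * Bt"
    by (simp add: sum_distrib_right)
  also have "(\<Sum>a\<in>{1..n}. (\<integral>\<omega>. indicator {a} (A \<omega>) \<partial>M)) = (\<integral>\<omega>. (\<Sum>a\<in>{1..n}. (indicator {a} (A \<omega>) :: real)) \<partial>M)"
    by (rule Bochner_Integration.integral_sum[symmetric])
       (rule P.integrable_const_bound[where B=1], auto simp: indm split: split_indicator)
  also have "\<dots> = (\<integral>\<omega>. 1 \<partial>M)"
  proof (rule Bochner_Integration.integral_cong[OF refl])
    fix \<omega> assume "\<omega> \<in> space M"
    then have "A \<omega> \<in> {1..n}" using assms(4) by auto
    then show "(\<Sum>a\<in>{1..n}. (indicator {a} (A \<omega>) :: real)) = 1"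
      using sum_ind[of "A \<omega>" "\<lambda>_. 1"] by simp
  qed
  also have "\<dots> = 1" by (simp add: P.prob_space)
  finally show ?thesis using Bneg by simp
qed

end
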